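(* For all integers $r>0$, $d\ge 0$, $j\ge 0$, we have $\widetilde{A}_{r,d}(j) = A_{r,d}(j)$.
   Context: For integers $r>0$, $d\ge 0$, $j$: let $\Theta_{r,d}(j)$ be the set of tuples $\vec k=(k_1,\dots,k_l)\in\mathbb{Z}^l$ (with $l\ge 0$ arbitrary) such that $0\le k_i\le r$ for all $i$, $\sum_i k_i = rd$, and $\sum_i i\,k_i = j + rd(d+1)/2$; and set $\widetilde{A}_{r,d}(j)\coloneqq \sum_{\vec k\in\Theta_{r,d}(j)} \prod_{i=1}^l \binom{r}{k_i}$. For a Young diagram $Y$, $|Y|$ is its number of boxes and $c(Y)$ its number of columns; for an $r$-tuple $\vec Y=(Y_1,\dots,Y_r)$, $|\vec Y|=\sum_\alpha |Y_\alpha|$; for $\vec m=(m_1,\dots,m_r)\in\mathbb{Z}^r$, $(\vec m,\vec m)\coloneqq \frac{1}{2r}\sum_{\alpha,\beta=1}^r (m_\alpha-m_\beta)^2$. Then $A_{r,d}(j)$ is the number of $r$-tuples $(m_\alpha, Y_\alpha)_{\alpha=1}^r$ with $m_\alpha\in\mathbb{Z}_{\ge 0}$, $\sum_\alpha m_\alpha = rd$, each $Y_\alpha$ a Young diagram with $c(Y_\alpha)\le m_\alpha$, and $|\vec Y| + (\vec m,\vec m)/2 = j$. *)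

theory Defs
  imports Complex_Main
begin

text \<open>A tuple (k_1,...,k_l) is represented by the list ks with ks!(i-1) = k_i.
  Tuples differing only by trailing zeros are identified (otherwise Theta would be
  infinite); we take the canonical representative with no trailing zero.\<close>

definition Theta :: "nat \<Rightarrow> nat \<Rightarrow> nat \<Rightarrow> nat list set" where
  "Theta r d j = {ks. (ks = [] \<or> last ks \<noteq> 0)
      \<and> (\<forall>i<length ks. ks ! i \<le> r)
      \<and> sum_list ks = r * d
      \<and> (\<Sum>i<length ks. (i + 1) * ks ! i) = j + r * d * (d + 1) div 2}"

definition A_tilde :: "nat \<Rightarrow> nat \<Rightarrow> nat \<Rightarrow> nat" where
  "A_tilde r d j = (\<Sum>ks\<in>Theta r d j. \<Prod>i<length ks. r choose (ks ! i))"

text \<open>Young diagram: list of row lengths, weakly decreasing, positive.\<close>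

definition young :: "nat list \<Rightarrow> bool" where
  "young Y \<longleftrightarrow> sorted_wrt (\<ge>) Y \<and> 0 \<notin> set Y"

definition ysize :: "nat list \<Rightarrow> nat" where
  "ysize Y = sum_list Y"

definition ncols :: "nat list \<Rightarrow> nat" where
  "ncols Y = (if Y = [] then 0 else hd Y)"

definition pairing :: "nat list \<Rightarrow> real" where
  "pairing ms = (1 / (2 * real (length ms))) *
     (\<Sum>a<length ms. \<Sum>b<length ms. (real (ms ! a) - real (ms ! b))\<^sup>2)"

definition A_count :: "nat \<Rightarrow> nat \<Rightarrow> nat \<Rightarrow> nat" where
  "A_count r d j = card {t :: (nat \<times> nat list) list.
      length t = r
      \<and> (\<forall>p\<in>set t. young (snd p) \<and> ncols (snd p) \<le> fst p)
      \<and> sum_list (map fst t) = r * d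
      \<and> real (sum_list (map (ysize \<circ> snd) t)) + pairing (map fst t) / 2 = real j}"

end

theory Submission
  imports Defs "HOL-Library.FuncSet"
begin


definition PP :: "nat \<Rightarrow> nat \<Rightarrow> nat" where
  "PP m n = card {Y. young Y \<and> ncols Y \<le> m \<and> ysize Y = n}"
definition QQ :: "nat \<Rightarrow> nat \<Rightarrow> nat" where
  "QQ m w = card {S::nat set. finite S \<and> 0 \<notin> S \<and> card S = m \<and> \<Sum>S = w}"

lemma young_Cons: "young (y # Y) \<longleftrightarrow> (\<forall>z\<in>set Y. z \<le> y) \<and> young Y \<and> 0 < y"
  unfolding young_def by auto

lemma young_le_ncols: "young Y \<Longrightarrow> z \<in> set Y \<Longrightarrow> z \<le> ncols Y"
  by (cases Y) (auto simp: young_Cons ncols_def)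

lemma length_le_sum_list: "0 \<notin> set (xs::nat list) \<Longrightarrow> length xs \<le> sum_list xs"
  by (induction xs) auto

lemma fin_P: "finite {Y. young Y \<and> ncols Y \<le> m \<and> ysize Y = n}"
proof (rule finite_subset)
  show "{Y. young Y \<and> ncols Y \<le> m \<and> ysize Y = n} \<subseteq> {xs. set xs \<subseteq> {0..n} \<and> length xs \<le> n}"
    using length_le_sum_list member_le_sum_list
    by (fastforce simp: young_def ysize_def)
  show "finite {xs. set xs \<subseteq> {0..n} \<and> length xs \<le> n}"
    by (rule finite_lists_length_le) auto
qed

lemma fin_Q: "finite {S::nat set. finite S \<and> 0 \<notin> S \<and> card S = m \<and> \<Sum>S = w}"
proof (rule finite_subset)
  show "{S. finite S \<and> 0 \<notin> S \<and> card S = m \<and> \<Sum>S = w} \<subseteq> Pow {..w}"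
    using member_le_sum by fastforce
qed auto

lemma PP_0: "PP 0 n = (if n = 0 then 1 else 0)"
proof -
  have e: "young Y \<Longrightarrow> ncols Y \<le> 0 \<Longrightarrow> Y = []" for Y
    by (cases Y) (auto simp: young_Cons ncols_def)
  have "{Y. young Y \<and> ncols Y \<le> 0 \<and> ysize Y = n} = (if n = 0 then {[]} else {})"
    using e by (auto simp: young_def ncols_def ysize_def)
  then show ?thesis by (simp add: PP_def)
qed

lemma QQ_0: "QQ 0 w = (if w = 0 then 1 else 0)"
proof -
  have "{S::nat set. finite S \<and> 0 \<notin> S \<and> card S = 0 \<and> \<Sum>S = w} = (if w = 0 then {{}} else {})"
    by auto
  then show ?thesis by (simp add: QQ_def)
qed

lemma PP_Suc: "PP (Suc m) n = PP m n + (if Suc m \<le> n then PP (Suc m) (n - Suc m) else 0)"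
proof -
  let ?A = "{Y. young Y \<and> ncols Y \<le> m \<and> ysize Y = n}"
  let ?B = "{Y. young Y \<and> ncols Y = Suc m \<and> ysize Y = n}"
  have split: "{Y. young Y \<and> ncols Y \<le> Suc m \<and> ysize Y = n} = ?A \<union> ?B" by auto
  have finB: "finite ?B" by (rule finite_subset[OF _ fin_P[of "Suc m" n]]) auto
  have cB: "card ?B = (if Suc m \<le> n then PP (Suc m) (n - Suc m) else 0)"
  proof (cases "Suc m \<le> n")
    case True
    have "?B = Cons (Suc m) ` {Y. young Y \<and> ncols Y \<le> Suc m \<and> ysize Y = n - Suc m}"
    proof (rule set_eqI, rule iffI)
      fix Y assume "Y \<in> ?B"
      then obtain Z where Y: "Y = Suc m # Z" and "young (Suc m # Z)" "sum_list Z + Suc m = n"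
        by (cases Y) (auto simp: ncols_def ysize_def)
      then have "young Z" "ncols Z \<le> Suc m"
        by (auto simp: young_Cons ncols_def)
      with Y \<open>sum_list Z + Suc m = n\<close> show "Y \<in> Cons (Suc m) ` {Y. young Y \<and> ncols Y \<le> Suc m \<and> ysize Y = n - Suc m}"
        by (auto simp: ysize_def)
    next
      fix Y assume "Y \<in> Cons (Suc m) ` {Y. young Y \<and> ncols Y \<le> Suc m \<and> ysize Y = n - Suc m}"
      then obtain Z where Y: "Y = Suc m # Z" "young Z" "ncols Z \<le> Suc m" "ysize Z = n - Suc m" by auto
      then show "Y \<in> ?B" using True young_le_ncols[of Z]
        by (auto simp: young_Cons ncols_def ysize_def) (metis order_trans)
    qed
    then show ?thesis using True by (simp add: card_image PP_def)
  next
    case False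
    have "?B = {}"
    proof (rule ccontr)
      assume "?B \<noteq> {}"
      then obtain Y where "young Y" "ncols Y = Suc m" "ysize Y = n" by auto
      then show False using False by (cases Y) (auto simp: ncols_def ysize_def)
    qed
    then show ?thesis using False by (metis card.empty)
  qed
  have "card (?A \<union> ?B) = card ?A + card ?B"
    by (rule card_Un_disjoint) (use fin_P finB in auto)
  then show ?thesis using split cB by (simp add: PP_def)
qed

lemma sum_Suc_image: "finite S \<Longrightarrow> \<Sum>(Suc ` S) = \<Sum>S + card (S::nat set)"
proof -
  assume f: "finite S"
  have "\<Sum>(Suc ` S) = sum Suc S" by (simp add: sum.reindex)
  also have "\<dots> = \<Sum>S + card S" using f by (induction rule: finite_induct) auto
  finally show ?thesis .
qed

lemma Suc_pred_image: "0 \<notin> S \<Longrightarrow> Suc ` ((\<lambda>x. x - 1) ` S) = (S::nat set)"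
proof -
  assume "0 \<notin> S"
  then have "\<forall>x\<in>S. Suc (x - 1) = x" by (metis Suc_pred' not_gr_zero)
  then show ?thesis by (force simp: image_image)
qed

lemma inj_image_Suc: "inj_on (image Suc) X"
  by (rule inj_onI) (simp add: inj_image_eq_iff)

lemma card_le_sum_pos: "finite S \<Longrightarrow> 0 \<notin> S \<Longrightarrow> card S \<le> \<Sum>(S::nat set)"
proof -
  assume "finite S" "0 \<notin> S"
  then have "(\<Sum>x\<in>S. (1::nat)) \<le> \<Sum>S"
    by (intro sum_mono) (metis One_nat_def Suc_leI neq0_conv)
  then show ?thesis by simp
qed

lemma QQ_Suc: "QQ (Suc m) w = (if Suc m \<le> w then QQ (Suc m) (w - Suc m) + QQ m (w - Suc m) else 0)"
proof (cases "Suc m \<le> w")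
  case False
  have "{S::nat set. finite S \<and> 0 \<notin> S \<and> card S = Suc m \<and> \<Sum>S = w} = {}"
    using card_le_sum_pos False by fastforce
  then show ?thesis using False unfolding QQ_def by (metis card.empty)
next
  case True
  define w' where "w' = w - Suc m"
  have w: "w = w' + Suc m" using True w'_def by simp
  let ?E = "{S::nat set. finite S \<and> 0 \<notin> S \<and> card S = Suc m \<and> \<Sum>S = w}"
  let ?A = "{S::nat set. finite S \<and> 0 \<notin> S \<and> card S = Suc m \<and> \<Sum>S = w \<and> 1 \<notin> S}"
  let ?B = "{S::nat set. finite S \<and> 0 \<notin> S \<and> card S = Suc m \<and> \<Sum>S = w \<and> 1 \<in> S}"
  let ?A' = "{S::nat set. finite S \<and> 0 \<notin> S \<and> card S = Suc m \<and> \<Sum>S = w'}"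
  let ?B' = "{S::nat set. finite S \<and> 0 \<notin> S \<and> card S = m \<and> \<Sum>S = w'}"
  have EAB: "?E = ?A \<union> ?B" by auto
  have finA: "finite ?A" by (rule finite_subset[OF _ fin_Q[of "Suc m" w]]) auto
  have finB: "finite ?B" by (rule finite_subset[OF _ fin_Q[of "Suc m" w]]) auto
  have A: "?A = image Suc ` ?A'"
  proof (rule set_eqI, rule iffI)
    fix S assume S: "S \<in> ?A"
    define S' where "S' = (\<lambda>x. x - 1) ` S"
    have 0: "0 \<notin> S" "1 \<notin> S" "finite S" using S by auto
    have eq: "Suc ` S' = S" unfolding S'_def by (rule Suc_pred_image) fact
    have "finite S'" using 0 S'_def by simp
    moreover have "0 \<notin> S'" using 0 eq by force
    moreover have "card S' = card S" using eq card_image[of Suc S'] by simp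
    moreover have "\<Sum>S' + card S' = \<Sum>S" using eq sum_Suc_image[OF \<open>finite S'\<close>] by simp
    ultimately show "S \<in> image Suc ` ?A'" using S eq w by (intro image_eqI[of _ _ S']) auto
  next
    fix S assume "S \<in> image Suc ` ?A'"
    then obtain S' where S: "S = Suc ` S'" "S' \<in> ?A'" by auto
    then show "S \<in> ?A" using sum_Suc_image[of S'] card_image[of Suc S'] w by auto
  qed
  have B: "?B = (\<lambda>S. insert 1 (Suc ` S)) ` ?B'"
  proof (rule set_eqI, rule iffI)
    fix S assume S: "S \<in> ?B"
    define S' where "S' = (\<lambda>x. x - 1) ` (S - {1})"
    have 0: "0 \<notin> S - {1}" "finite S" "1 \<in> S" using S by auto
    have eq: "Suc ` S' = S - {1}" unfolding S'_def by (rule Suc_pred_image) fact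
    have "finite S'" using 0 S'_def by simp
    moreover have "0 \<notin> S'" using 0 eq by force
    moreover have "card S' = m" using eq card_image[of Suc S'] S 0 by simp
    moreover have "\<Sum>S' + card S' + 1 = \<Sum>S" using eq sum_Suc_image[OF \<open>finite S'\<close>]
      sum.remove[OF 0(2,3), of id] by simp
    moreover have "S = insert 1 (Suc ` S')" using eq 0 by auto
    ultimately show "S \<in> (\<lambda>S. insert 1 (Suc ` S)) ` ?B'" using S w by (intro image_eqI[of _ _ S']) auto
  next
    fix S assume "S \<in> (\<lambda>S. insert 1 (Suc ` S)) ` ?B'"
    then obtain S' where S: "S = insert 1 (Suc ` S')" "S' \<in> ?B'" by auto
    have n1: "1 \<notin> Suc ` S'" using S by auto
    then show "S \<in> ?B" using S sum_Suc_image[of S'] card_image[of Suc S'] w by auto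
  qed
  have injB: "inj_on (\<lambda>S. insert 1 (Suc ` S)) ?B'"
  proof (rule inj_onI)
    fix S T assume "S \<in> ?B'" "T \<in> ?B'" "insert 1 (Suc ` S) = insert 1 (Suc ` T)"
    moreover have "1 \<notin> Suc ` S" "1 \<notin> Suc ` T" using \<open>S \<in> ?B'\<close> \<open>T \<in> ?B'\<close> by auto
    ultimately have "Suc ` S = Suc ` T" using insert_ident by metis
    then show "S = T" by (simp add: inj_image_eq_iff)
  qed
  have "card ?E = card ?A + card ?B"
    unfolding EAB by (rule card_Un_disjoint[OF finA finB]) auto
  also have "card ?A = QQ (Suc m) w'" unfolding A QQ_def by (rule card_image[OF inj_image_Suc])
  also have "card ?B = QQ m w'" unfolding B QQ_def by (rule card_image[OF injB])
  finally show ?thesis using True w'_def by (simp add: QQ_def)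
qed

definition tri :: "nat \<Rightarrow> nat" where "tri m = m * (m + 1) div 2"

lemma tri_0[simp]: "tri 0 = 0" by (simp add: tri_def)
lemma tri_Suc: "tri (Suc m) = tri m + Suc m" by (simp add: tri_def)

lemma QQ_PP: "QQ m w = (if tri m \<le> w then PP m (w - tri m) else 0)"
proof (induction w arbitrary: m rule: less_induct)
  case (less w)
  show ?case
  proof (cases m)
    case 0
    then show ?thesis by (simp add: QQ_0 PP_0)
  next
    case (Suc k)
    show ?thesis
    proof (cases "Suc k \<le> w")
      case False
      then show ?thesis using Suc QQ_Suc[of k w] by (simp add: tri_Suc)
    next
      case True
      have IH1: "QQ (Suc k) (w - Suc k) = (if tri (Suc k) \<le> w - Suc k then PP (Suc k) (w - Suc k - tri (Suc k)) else 0)"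
        using less True by simp
      have IH2: "QQ k (w - Suc k) = (if tri k \<le> w - Suc k then PP k (w - Suc k - tri k) else 0)"
        using less True by simp
      have P: "PP (Suc k) (w - tri (Suc k)) = PP k (w - tri (Suc k)) + (if Suc k \<le> w - tri (Suc k) then PP (Suc k) (w - tri (Suc k) - Suc k) else 0)"
        by (rule PP_Suc)
      show ?thesis using Suc QQ_Suc[of k w] True IH1 IH2 P
        by (auto simp: tri_Suc ac_simps)
    qed
  qed
qed



lemma fiber_bij:
  assumes fA: "\<And>k. finite {x\<in>A. f x = k}" and fB: "\<And>k. finite {y\<in>B. g y = k}"
    and c: "\<And>k. card {x\<in>A. f x = k} = card {y\<in>B. g y = k}"
  shows "\<exists>h. bij_betw h A B \<and> (\<forall>x\<in>A. g (h x) = f x)"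
proof -
  have "\<forall>k. \<exists>b. bij_betw b {x\<in>A. f x = k} {y\<in>B. g y = k}"
    using finite_same_card_bij[OF fA fB c] by blast
  then obtain b where b: "\<And>k. bij_betw (b k) {x\<in>A. f x = k} {y\<in>B. g y = k}" by metis
  define h where "h x = b (f x) x" for x
  have into: "h x \<in> B \<and> g (h x) = f x" if "x \<in> A" for x
  proof -
    have "x \<in> {z\<in>A. f z = f x}" using that by simp
    then have "b (f x) x \<in> {y\<in>B. g y = f x}" by (rule bij_betw_apply[OF b[of "f x"]])
    then show ?thesis by (simp add: h_def)
  qed
  have "bij_betw h A B"
    unfolding bij_betw_def
  proof (intro conjI)
    show "inj_on h A"
    proof (rule inj_onI)
      fix x y assume xy: "x \<in> A" "y \<in> A" "h x = h y"
      then have "f x = f y" using into by metis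
      then have "b (f x) x = b (f x) y" using xy by (simp add: h_def)
      moreover have "inj_on (b (f x)) {z\<in>A. f z = f x}" using b bij_betw_def by blast
      ultimately show "x = y" using xy \<open>f x = f y\<close> by (auto dest: inj_onD)
    qed
    show "h ` A = B"
    proof
      show "h ` A \<subseteq> B" using into by auto
      show "B \<subseteq> h ` A"
      proof
        fix y assume y: "y \<in> B"
        then have "y \<in> {z\<in>B. g z = g y}" by simp
        moreover have "b (g y) ` {z\<in>A. f z = g y} = {z\<in>B. g z = g y}"
          using b[of "g y"] by (simp add: bij_betw_def)
        ultimately obtain x where "x \<in> {z\<in>A. f z = g y}" "b (g y) x = y"
          by (metis (no_types, lifting) imageE)
        then show "y \<in> h ` A" unfolding h_def by (intro image_eqI[of _ _ x]) auto
      qed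
    qed
  qed
  then show ?thesis using into by blast
qed

definition EE :: "nat set set" where "EE = {S. finite S \<and> 0 \<notin> S}"
definition CC :: "(nat \<times> nat list) set" where "CC = {p. young (snd p) \<and> ncols (snd p) \<le> fst p}"
definition fE :: "nat set \<Rightarrow> nat \<times> nat" where "fE S = (card S, \<Sum>S)"
definition gC :: "nat \<times> nat list \<Rightarrow> nat \<times> nat" where "gC p = (fst p, ysize (snd p) + tri (fst p))"

lemma exists_h: "\<exists>h. bij_betw h EE CC \<and> (\<forall>x\<in>EE. gC (h x) = fE x)"
proof (rule fiber_bij)
  fix k :: "nat \<times> nat"
  obtain m w where k: "k = (m, w)" by (cases k)
  have A: "{x\<in>EE. fE x = k} = {S::nat set. finite S \<and> 0 \<notin> S \<and> card S = m \<and> \<Sum>S = w}"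
    by (auto simp: EE_def fE_def k)
  have B: "{y\<in>CC. gC y = k} = (if tri m \<le> w then Pair m ` {Y. young Y \<and> ncols Y \<le> m \<and> ysize Y = w - tri m} else {})"
    by (auto simp: CC_def gC_def k)
  show "finite {x\<in>EE. fE x = k}" unfolding A by (rule fin_Q)
  show "finite {y\<in>CC. gC y = k}" unfolding B using fin_P by simp
  show "card {x\<in>EE. fE x = k} = card {y\<in>CC. gC y = k}"
  proof -
    have "card {S::nat set. finite S \<and> 0 \<notin> S \<and> card S = m \<and> \<Sum>S = w} = (if tri m \<le> w then card {Y. young Y \<and> ncols Y \<le> m \<and> ysize Y = w - tri m} else 0)"
      using QQ_PP[of m w] by (simp add: QQ_def PP_def)
    then show ?thesis unfolding A B by (simp add: card_image inj_on_def)
  qed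
qed

lemma double_sq_sum:
  fixes x :: "nat \<Rightarrow> real"
  shows "(\<Sum>a<n. \<Sum>b<n. (x a - x b)\<^sup>2) = 2 * real n * (\<Sum>a<n. (x a)\<^sup>2) - 2 * (\<Sum>a<n. x a)\<^sup>2"
  by (simp add: power2_diff sum.distrib sum_subtractf sum_distrib_left sum_distrib_right
      power2_eq_square algebra_simps)

lemma pairing_tri:
  assumes "length ms = r" "r > 0" "sum_list ms = r * d"
  shows "real (sum_list (map tri ms)) = real (r * d * (d + 1) div 2) + pairing ms / 2"
proof -
  define x where "x a = real (ms ! a)" for a
  have s: "(\<Sum>a<r. x a) = real r * real d"
    using assms sum_list_sum_nth[of ms] by (simp add: x_def atLeast0LessThan flip: of_nat_sum)
  have t2: "real (tri m) = (real m ^ 2 + real m) / 2" for m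
  proof -
    have "even (m * (m + 1))" by simp
    then have "real (m * (m + 1) div 2) = real (m * (m + 1)) / 2" by (simp add: real_of_nat_div)
    then show ?thesis by (simp add: tri_def power2_eq_square algebra_simps)
  qed
  have rd: "real (r * d * (d + 1) div 2) = (real r * real d ^ 2 + real r * real d) / 2"
  proof -
    have "even (r * d * (d + 1))" by simp
    then have "real (r * d * (d + 1) div 2) = real (r * d * (d + 1)) / 2" by (simp add: real_of_nat_div)
    then show ?thesis by (simp add: power2_eq_square algebra_simps)
  qed
  have lt0: "real (sum_list (map tri ms)) = (\<Sum>a<r. ((x a)^2 + x a) / 2)"
    using assms(1) sum_list_sum_nth[of "map tri ms"]
    by (simp add: x_def t2 atLeast0LessThan of_nat_sum)
  have lt: "real (sum_list (map tri ms)) = ((\<Sum>a<r. (x a)^2) + (\<Sum>a<r. x a)) / 2"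
    unfolding lt0 by (simp add: sum_divide_distrib[symmetric] sum.distrib)
  have p: "pairing ms = (1 / (2 * real r)) * (2 * real r * (\<Sum>a<r. (x a)\<^sup>2) - 2 * (\<Sum>a<r. x a)\<^sup>2)"
    unfolding pairing_def double_sq_sum[symmetric] using assms(1) by (simp add: x_def)
  show ?thesis using assms(2) unfolding lt p rd s
    by (simp add: sum_divide_distrib sum.distrib field_simps power2_eq_square)
qed

definition SS :: "nat \<Rightarrow> nat \<Rightarrow> nat \<Rightarrow> nat set list set" where
  "SS r N W = {Ss. set Ss \<subseteq> EE \<and> length Ss = r \<and> sum_list (map card Ss) = N \<and> sum_list (map Sum Ss) = W}"

lemma step2:
  assumes "r > 0"
  shows "card (SS r (r*d) (j + r*d*(d+1) div 2)) = A_count r d j"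
proof -
  obtain h where h: "bij_betw h EE CC" "\<And>x. x \<in> EE \<Longrightarrow> gC (h x) = fE x"
    using exists_h by blast
  have hf: "fst (h x) = card x" "ysize (snd (h x)) + tri (fst (h x)) = \<Sum>x" if "x \<in> EE" for x
    using h(2)[OF that] by (auto simp: gC_def fE_def)
  have hf2: "ysize (snd (h x)) + tri (card x) = \<Sum>x" if "x \<in> EE" for x
    using hf[OF that] by simp
  have sums: "sum_list (map fst (map h xs)) = sum_list (map card xs) \<and>
      sum_list (map Sum xs) = sum_list (map (ysize \<circ> snd) (map h xs)) + sum_list (map tri (map fst (map h xs)))"
    if "set xs \<subseteq> EE" for xs
    using that by (induction xs) (auto simp: hf(1) hf2)
  define K where "K = r*d*(d+1) div 2"
  let ?AC = "{t :: (nat \<times> nat list) list. length t = r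
      \<and> (\<forall>p\<in>set t. young (snd p) \<and> ncols (snd p) \<le> fst p)
      \<and> sum_list (map fst t) = r * d
      \<and> real (sum_list (map (ysize \<circ> snd) t)) + pairing (map fst t) / 2 = real j}"
  have bl: "bij_betw (map h) (lists EE) (lists CC)" by (rule bij_lists[OF h(1)])
  have key: "xs \<in> SS r (r*d) (j + K) \<longleftrightarrow> map h xs \<in> ?AC" if xs: "xs \<in> lists EE" for xs
  proof -
    have sx: "set xs \<subseteq> EE" using xs by auto
    have inC: "\<forall>p\<in>set (map h xs). young (snd p) \<and> ncols (snd p) \<le> fst p"
      using sx bij_betw_apply[OF h(1)] by (auto simp: CC_def)
    show ?thesis
    proof (cases "length xs = r \<and> sum_list (map card xs) = r * d")
      case True
      have pt: "real (sum_list (map tri (map fst (map h xs)))) = real K + pairing (map fst (map h xs)) / 2"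
        unfolding K_def by (rule pairing_tri) (use True sums[OF sx] assms in auto)
      have "sum_list (map Sum xs) = j + K \<longleftrightarrow>
          real (sum_list (map (ysize \<circ> snd) (map h xs))) + real (sum_list (map tri (map fst (map h xs)))) = real j + real K"
        using sums[OF sx] by (simp flip: of_nat_add)
      also have "\<dots> \<longleftrightarrow> real (sum_list (map (ysize \<circ> snd) (map h xs))) + pairing (map fst (map h xs)) / 2 = real j"
        unfolding pt by linarith
      finally show ?thesis using True sx inC sums[OF sx] by (simp add: SS_def)
    next
      case False
      then show ?thesis using sums[OF sx] by (auto simp: SS_def)
    qed
  qed
  have sub: "SS r (r*d) (j + K) \<subseteq> lists EE" by (auto simp: SS_def)
  have img: "map h ` SS r (r*d) (j + K) = ?AC"
  proof
    show "map h ` SS r (r*d) (j + K) \<subseteq> ?AC" using key sub by blast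
    show "?AC \<subseteq> map h ` SS r (r*d) (j + K)"
    proof
      fix t assume t: "t \<in> ?AC"
      then have "t \<in> lists CC" by (auto simp: CC_def)
      then obtain xs where xs: "xs \<in> lists EE" "t = map h xs"
        using bl by (metis bij_betw_def imageE)
      then show "t \<in> map h ` SS r (r*d) (j + K)" using key t by blast
    qed
  qed
  have "inj_on (map h) (SS r (r*d) (j + K))"
    using bl sub by (meson bij_betw_def inj_on_subset)
  then have "card (SS r (r*d) (j + K)) = card ?AC" using img card_image by metis
  then show ?thesis unfolding A_count_def K_def by simp
qed



definition Th :: "nat \<Rightarrow> nat \<Rightarrow> nat \<Rightarrow> nat list set" where
  "Th r N W = {ks. (ks = [] \<or> last ks \<noteq> 0)
      \<and> (\<forall>i<length ks. ks ! i \<le> r)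
      \<and> sum_list ks = N
      \<and> (\<Sum>i<length ks. (i + 1) * ks ! i) = W}"

definition cnt :: "nat set list \<Rightarrow> nat list" where
  "cnt Ss = map (\<lambda>i. card {a. a < length Ss \<and> Suc i \<in> Ss ! a}) [0..<Max (insert 0 (\<Union>(set Ss)))]"

definition FF :: "nat \<Rightarrow> nat list \<Rightarrow> nat set list set" where
  "FF r ks = {Ss. length Ss = r \<and> (\<forall>S\<in>set Ss. S \<subseteq> {1..length ks})
     \<and> (\<forall>i<length ks. card {a. a < r \<and> Suc i \<in> Ss ! a} = ks ! i)}"

lemma sum_list_map_nth: "sum_list (map f xs) = (\<Sum>a<length xs. f (xs ! a))"
  by (simp add: sum_list_sum_nth atLeast0LessThan)

lemma card_count: "card {a. a < (n::nat) \<and> P a} = (\<Sum>a<n. if P a then 1 else 0)"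
proof (induction n)
  case 0 then show ?case by simp
next
  case (Suc n)
  have "{a. a < Suc n \<and> P a} = {a. a < n \<and> P a} \<union> (if P n then {n} else {})" by (auto simp: less_Suc_eq)
  then show ?case using Suc by (auto simp: card_insert_if)
qed

lemma card_sub_L: "S \<subseteq> {1..L} \<Longrightarrow> card S = (\<Sum>i<L. if Suc i \<in> S then 1 else 0)"
proof -
  assume S: "S \<subseteq> {1..L}"
  have "S = Suc ` {i. i < L \<and> Suc i \<in> S}"
  proof (rule set_eqI, rule iffI)
    fix x assume x: "x \<in> S"
    then have "x \<in> {1..L}" using S by blast
    then have "x = Suc (x - 1)" "x - 1 < L" by auto
    then show "x \<in> Suc ` {i. i < L \<and> Suc i \<in> S}" using x by (intro image_eqI[of _ _ "x - 1"]) auto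
  qed auto
  then have "card S = card {i. i < L \<and> Suc i \<in> S}" by (metis card_image inj_Suc inj_on_subset subset_UNIV)
  then show ?thesis by (simp add: card_count)
qed

lemma Sum_sub_L: "S \<subseteq> {1..L} \<Longrightarrow> \<Sum>S = (\<Sum>i<L. if Suc i \<in> S then Suc i else 0)"
proof -
  assume S: "S \<subseteq> {1..L}"
  have eq: "S = Suc ` {i. i < L \<and> Suc i \<in> S}"
  proof (rule set_eqI, rule iffI)
    fix x assume x: "x \<in> S"
    then have "x \<in> {1..L}" using S by blast
    then have "x = Suc (x - 1)" "x - 1 < L" by auto
    then show "x \<in> Suc ` {i. i < L \<and> Suc i \<in> S}" using x by (intro image_eqI[of _ _ "x - 1"]) auto
  qed auto
  have "\<Sum>S = (\<Sum>i\<in>{i. i < L \<and> Suc i \<in> S}. Suc i)"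
    by (subst eq) (simp add: sum.reindex)
  also have "\<dots> = (\<Sum>i\<in>{i\<in>{..<L}. Suc i \<in> S}. Suc i)"
    by (rule sum.cong) auto
  also have "\<dots> = (\<Sum>i<L. if Suc i \<in> S then Suc i else 0)"
    by (rule sum.inter_filter) simp
  finally show ?thesis .
qed

lemma double_count:
  assumes "\<forall>S\<in>set Ss. S \<subseteq> {1..L}"
  shows "sum_list (map card Ss) = (\<Sum>i<L. card {a. a < length Ss \<and> Suc i \<in> Ss ! a})"
    and "sum_list (map Sum Ss) = (\<Sum>i<L. (i + 1) * card {a. a < length Ss \<and> Suc i \<in> Ss ! a})"
proof -
  have S: "Ss ! a \<subseteq> {1..L}" if "a < length Ss" for a using assms that by auto
  have "sum_list (map card Ss) = (\<Sum>a<length Ss. \<Sum>i<L. if Suc i \<in> Ss ! a then 1 else 0)"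
    unfolding sum_list_map_nth by (rule sum.cong) (auto simp: card_sub_L[OF S])
  also have "\<dots> = (\<Sum>i<L. \<Sum>a<length Ss. if Suc i \<in> Ss ! a then 1 else 0)" by (rule sum.swap)
  finally show "sum_list (map card Ss) = (\<Sum>i<L. card {a. a < length Ss \<and> Suc i \<in> Ss ! a})"
    by (simp add: card_count)
  have "sum_list (map Sum Ss) = (\<Sum>a<length Ss. \<Sum>i<L. if Suc i \<in> Ss ! a then Suc i else 0)"
    unfolding sum_list_map_nth by (rule sum.cong) (auto simp: Sum_sub_L[OF S])
  also have "\<dots> = (\<Sum>i<L. \<Sum>a<length Ss. if Suc i \<in> Ss ! a then Suc i else 0)" by (rule sum.swap)
  also have "\<dots> = (\<Sum>i<L. Suc i * (\<Sum>a<length Ss. if Suc i \<in> Ss ! a then 1 else 0))"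
    unfolding sum_distrib_left by (auto intro!: sum.cong)
  finally show "sum_list (map Sum Ss) = (\<Sum>i<L. (i + 1) * card {a. a < length Ss \<and> Suc i \<in> Ss ! a})"
    by (simp add: card_count)
qed

lemma card_FF: "card (FF r ks) = (\<Prod>i<length ks. r choose (ks ! i))"
proof -
  define L where "L = length ks"
  define P where "P = (\<Pi>\<^sub>E i\<in>{..<L}. {A. A \<subseteq> {..<r} \<and> card A = ks ! i})"
  define phi where "phi Ss = (\<lambda>i\<in>{..<L}. {a. a < r \<and> Suc i \<in> Ss ! a})" for Ss :: "nat set list"
  define psi where "psi f = map (\<lambda>a. Suc ` {i. i < L \<and> a \<in> f i}) [0..<r]" for f :: "nat \<Rightarrow> nat set"
  have FF: "FF r ks = {Ss. length Ss = r \<and> (\<forall>S\<in>set Ss. S \<subseteq> {1..L})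
     \<and> (\<forall>i<L. card {a. a < r \<and> Suc i \<in> Ss ! a} = ks ! i)}" by (simp add: FF_def L_def)
  have "bij_betw phi (FF r ks) P"
  proof (rule bij_betw_byWitness[where f'=psi])
    show "\<forall>Ss\<in>FF r ks. psi (phi Ss) = Ss"
    proof
      fix Ss assume Ss: "Ss \<in> FF r ks"
      show "psi (phi Ss) = Ss"
      proof (rule nth_equalityI)
        show "length (psi (phi Ss)) = length Ss" using Ss by (simp add: psi_def FF)
        fix a assume "a < length (psi (phi Ss))"
        then have a: "a < r" "a < length Ss" using Ss by (auto simp: psi_def FF)
        have sub: "Ss ! a \<subseteq> {1..L}" using Ss a by (auto simp: FF)
        have "Suc ` {i. i < L \<and> a \<in> phi Ss i} = Ss ! a"
        proof (rule set_eqI, rule iffI)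
          fix x assume "x \<in> Suc ` {i. i < L \<and> a \<in> phi Ss i}"
          then show "x \<in> Ss ! a" by (auto simp: phi_def)
        next
          fix x assume x: "x \<in> Ss ! a"
          then have "x \<in> {1..L}" using sub by blast
          then have "x = Suc (x - 1)" "x - 1 < L" by auto
          then show "x \<in> Suc ` {i. i < L \<and> a \<in> phi Ss i}"
            using x a by (intro image_eqI[of _ _ "x - 1"]) (auto simp: phi_def)
        qed
        then show "psi (phi Ss) ! a = Ss ! a" using a by (simp add: psi_def)
      qed
    qed
    show "\<forall>f\<in>P. phi (psi f) = f"
    proof
      fix f assume f: "f \<in> P"
      show "phi (psi f) = f"
      proof (rule ext)
        fix i
        show "phi (psi f) i = f i"
        proof (cases "i < L")
          case True
          have "f i \<subseteq> {..<r}" using f True by (auto simp: P_def)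
          then have "{a. a < r \<and> Suc i \<in> psi f ! a} = f i"
            using True by (auto simp: psi_def)
          then show ?thesis using True by (simp add: phi_def)
        next
          case False
          then show ?thesis using f by (auto simp: phi_def P_def PiE_def extensional_def)
        qed
      qed
    qed
    show "phi ` FF r ks \<subseteq> P"
      by (auto simp: phi_def P_def FF)
    show "psi ` P \<subseteq> FF r ks"
    proof
      fix Ss assume "Ss \<in> psi ` P"
      then obtain f where f: "f \<in> P" "Ss = psi f" by auto
      have "length Ss = r" using f by (simp add: psi_def)
      moreover have "\<forall>S\<in>set Ss. S \<subseteq> {1..L}" using f by (auto simp: psi_def)
      moreover have "card {a. a < r \<and> Suc i \<in> Ss ! a} = ks ! i" if i: "i < L" for i
      proof -
        have "f i \<subseteq> {..<r}" "card (f i) = ks ! i" using f i by (auto simp: P_def)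
        moreover have "{a. a < r \<and> Suc i \<in> Ss ! a} = f i"
          using calculation(1) i f by (auto simp: psi_def)
        ultimately show ?thesis by simp
      qed
      ultimately show "Ss \<in> FF r ks" by (simp add: FF)
    qed
  qed
  then have "card (FF r ks) = card P" by (rule bij_betw_same_card)
  also have "\<dots> = (\<Prod>i<L. card {A. A \<subseteq> {..<r} \<and> card A = ks ! i})"
    unfolding P_def by (rule card_PiE) simp
  also have "\<dots> = (\<Prod>i<L. r choose (ks ! i))"
    by (simp add: n_subsets)
  finally show ?thesis by (simp add: L_def)
qed

lemma fin_SS: "finite (SS r N W)"
proof (rule finite_subset)
  show "SS r N W \<subseteq> {xs. set xs \<subseteq> Pow {..W} \<and> length xs = r}"
  proof
    fix Ss assume Ss: "Ss \<in> SS r N W"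
    have "S \<subseteq> {..W}" if S: "S \<in> set Ss" for S
    proof
      fix x assume x: "x \<in> S"
      have fS: "finite S" using Ss S by (auto simp: SS_def EE_def)
      have "x \<le> \<Sum>S" using member_le_sum[OF x _ fS, of id] by simp
      also have "\<Sum>S \<le> sum_list (map Sum Ss)" using S by (intro member_le_sum_list) auto
      finally show "x \<in> {..W}" using Ss by (simp add: SS_def)
    qed
    then show "Ss \<in> {xs. set xs \<subseteq> Pow {..W} \<and> length xs = r}" using Ss by (auto simp: SS_def)
  qed
  show "finite {xs. set xs \<subseteq> Pow {..W} \<and> length xs = r}"
    by (rule finite_lists_length_eq) simp
qed

lemma bound_L:
  assumes "set Ss \<subseteq> EE"
  shows "\<forall>S\<in>set Ss. S \<subseteq> {1..Max (insert 0 (\<Union>(set Ss)))}"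
proof -
  have fin: "finite (\<Union>(set Ss))" using assms by (auto simp: EE_def)
  show ?thesis
  proof (intro ballI subsetI)
    fix S x assume S: "S \<in> set Ss" "x \<in> S"
    have "S \<in> EE" using assms S by blast
    then have "0 \<notin> S" by (simp add: EE_def)
    then have "x \<noteq> 0" using S by metis
    moreover have "x \<in> insert 0 (\<Union>(set Ss))" using S by auto
    then have "x \<le> Max (insert 0 (\<Union>(set Ss)))" using fin by (intro Max_ge) auto
    ultimately show "x \<in> {1..Max (insert 0 (\<Union>(set Ss)))}" by auto
  qed
qed

lemma cnt_in_Th: "Ss \<in> SS r N W \<Longrightarrow> cnt Ss \<in> Th r N W"
proof -
  assume Ss: "Ss \<in> SS r N W"
  define L where "L = Max (insert 0 (\<Union>(set Ss)))"
  have sE: "set Ss \<subseteq> EE" and len: "length Ss = r" using Ss by (auto simp: SS_def)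
  have fin: "finite (\<Union>(set Ss))" using sE by (auto simp: EE_def)
  have B: "\<forall>S\<in>set Ss. S \<subseteq> {1..L}" using bound_L[OF sE] by (simp add: L_def)
  have c: "cnt Ss = map (\<lambda>i. card {a. a < length Ss \<and> Suc i \<in> Ss ! a}) [0..<L]"
    by (simp add: cnt_def L_def)
  have last: "cnt Ss = [] \<or> last (cnt Ss) \<noteq> 0"
  proof (cases "L = 0")
    case True then show ?thesis by (simp add: c)
  next
    case False
    then have "L \<in> insert 0 (\<Union>(set Ss))" unfolding L_def using fin by (intro Max_in) auto
    then obtain S where S: "S \<in> set Ss" "L \<in> S" using False by auto
    then obtain a where a: "a < length Ss" "Ss ! a = S" by (metis in_set_conv_nth)
    have "L = Suc (L - 1)" using False by simp
    then have "a \<in> {a. a < length Ss \<and> Suc (L - 1) \<in> Ss ! a}" using a S by simp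
    then have "card {a. a < length Ss \<and> Suc (L - 1) \<in> Ss ! a} \<noteq> 0" by (auto simp: card_eq_0_iff)
    then show ?thesis using False by (simp add: c last_map)
  qed
  have le: "\<forall>i<length (cnt Ss). cnt Ss ! i \<le> r"
  proof (intro allI impI)
    fix i assume "i < length (cnt Ss)"
    then have "cnt Ss ! i = card {a. a < length Ss \<and> Suc i \<in> Ss ! a}" by (simp add: c)
    also have "\<dots> \<le> card {..<length Ss}" by (rule card_mono) auto
    finally show "cnt Ss ! i \<le> r" using len by simp
  qed
  have s1: "sum_list (cnt Ss) = N"
    using double_count(1)[OF B] Ss len by (simp add: c SS_def sum_list_sum_nth atLeast0LessThan)
  have s2: "(\<Sum>i<length (cnt Ss). (i + 1) * cnt Ss ! i) = W"
    using double_count(2)[OF B] Ss len by (simp add: c SS_def)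
  show ?thesis using last le s1 s2 by (simp add: Th_def)
qed

lemma fiber_eq:
  assumes ks: "ks \<in> Th r N W"
  shows "{Ss \<in> SS r N W. cnt Ss = ks} = FF r ks"
proof (rule set_eqI, rule iffI)
  fix Ss assume "Ss \<in> {Ss \<in> SS r N W. cnt Ss = ks}"
  then have Ss: "Ss \<in> SS r N W" "cnt Ss = ks" by auto
  define L where "L = Max (insert 0 (\<Union>(set Ss)))"
  have sE: "set Ss \<subseteq> EE" and len: "length Ss = r" using Ss by (auto simp: SS_def)
  have B: "\<forall>S\<in>set Ss. S \<subseteq> {1..L}" using bound_L[OF sE] by (simp add: L_def)
  have c: "cnt Ss = map (\<lambda>i. card {a. a < length Ss \<and> Suc i \<in> Ss ! a}) [0..<L]"
    by (simp add: cnt_def L_def)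
  have "length (cnt Ss) = L" unfolding c by simp
  then have lk: "length ks = L" using Ss(2) by simp
  have "ks ! i = card {a. a < r \<and> Suc i \<in> Ss ! a}" if "i < L" for i
  proof -
    have "ks ! i = cnt Ss ! i" using Ss(2) by simp
    also have "\<dots> = card {a. a < length Ss \<and> Suc i \<in> Ss ! a}" unfolding c using that by simp
    finally show ?thesis using len by simp
  qed
  then show "Ss \<in> FF r ks" unfolding FF_def
    using B lk len by auto
next
  fix Ss assume Ss: "Ss \<in> FF r ks"
  define L where "L = length ks"
  have len: "length Ss = r" and B: "\<forall>S\<in>set Ss. S \<subseteq> {1..L}"
    and cn: "\<And>i. i < L \<Longrightarrow> card {a. a < r \<and> Suc i \<in> Ss ! a} = ks ! i"
    using Ss by (auto simp: FF_def L_def)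
  have "\<Union>(set Ss) \<subseteq> {1..L}" using B by blast
  then have fin: "finite (\<Union>(set Ss))" by (rule finite_subset) simp
  have sE: "set Ss \<subseteq> EE"
  proof
    fix S assume S: "S \<in> set Ss"
    then have "S \<subseteq> {1..L}" using B by blast
    then have "finite S" "0 \<notin> S" by (auto intro: finite_subset)
    then show "S \<in> EE" by (simp add: EE_def)
  qed
  have s1: "sum_list (map card Ss) = N"
  proof -
    have "sum_list (map card Ss) = (\<Sum>i<L. ks ! i)" using double_count(1)[OF B] len cn by simp
    also have "\<dots> = sum_list ks" by (simp add: L_def sum_list_sum_nth atLeast0LessThan)
    finally show ?thesis using ks by (simp add: Th_def)
  qed
  have s2: "sum_list (map Sum Ss) = W"
  proof -
    have "sum_list (map Sum Ss) = (\<Sum>i<L. (i + 1) * ks ! i)" using double_count(2)[OF B] len cn by simp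
    then show ?thesis using ks by (simp add: Th_def L_def)
  qed
  have M: "Max (insert 0 (\<Union>(set Ss))) = L"
  proof (cases "L = 0")
    case True
    then have e: "\<Union>(set Ss) = {}" using B by auto
    show ?thesis unfolding e using True by simp
  next
    case False
    then have "last ks \<noteq> 0" using ks by (auto simp: Th_def L_def)
    then have "ks ! (L - 1) \<noteq> 0" using False by (simp add: L_def last_conv_nth)
    moreover have "card {a. a < r \<and> Suc (L - 1) \<in> Ss ! a} = ks ! (L - 1)" using cn[of "L - 1"] False by simp
    ultimately have "card {a. a < r \<and> Suc (L - 1) \<in> Ss ! a} \<noteq> 0" by simp
    then obtain a where a: "a < r" "Suc (L - 1) \<in> Ss ! a" by (metis (no_types, lifting) Collect_empty_eq card.empty)
    then have "L \<in> \<Union>(set Ss)" using False len by (metis Suc_pred' UnionI neq0_conv nth_mem)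
    moreover have "\<forall>y\<in>\<Union>(set Ss). y \<le> L"
    proof
      fix y assume "y \<in> \<Union>(set Ss)"
      then obtain S where "S \<in> set Ss" "y \<in> S" by blast
      then have "y \<in> {1..L}" using B by blast
      then show "y \<le> L" by simp
    qed
    ultimately show ?thesis
      using fin by (intro Max_eqI) auto
  qed
  have "cnt Ss = ks"
    unfolding cnt_def M using len cn by (intro nth_equalityI) (auto simp: L_def)
  then show "Ss \<in> {Ss \<in> SS r N W. cnt Ss = ks}" using sE len s1 s2 by (simp add: SS_def)
qed

lemma step1: "(\<Sum>ks\<in>Th r N W. \<Prod>i<length ks. r choose (ks ! i)) = card (SS r N W)"
proof -
  have img: "cnt ` SS r N W = Th r N W"
  proof
    show "cnt ` SS r N W \<subseteq> Th r N W" using cnt_in_Th by blast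
    show "Th r N W \<subseteq> cnt ` SS r N W"
    proof
      fix ks assume ks: "ks \<in> Th r N W"
      have "(\<Prod>i<length ks. r choose (ks ! i)) \<noteq> 0"
        using ks by (auto simp: Th_def)
      then have "FF r ks \<noteq> {}" using card_FF[of r ks] by force
      then obtain Ss where "Ss \<in> {Ss \<in> SS r N W. cnt Ss = ks}" using fiber_eq[OF ks] by blast
      then show "ks \<in> cnt ` SS r N W" by blast
    qed
  qed
  have "card (SS r N W) = (\<Sum>Ss\<in>SS r N W. 1)" by simp
  also have "\<dots> = (\<Sum>ks\<in>cnt ` SS r N W. \<Sum>Ss\<in>{Ss \<in> SS r N W. cnt Ss = ks}. 1)"
    by (rule sum.image_gen[OF fin_SS])
  also have "\<dots> = (\<Sum>ks\<in>Th r N W. card (FF r ks))"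
    unfolding img by (rule sum.cong) (auto simp: fiber_eq)
  also have "\<dots> = (\<Sum>ks\<in>Th r N W. \<Prod>i<length ks. r choose (ks ! i))"
    by (simp add: card_FF)
  finally show ?thesis by simp
qed

theorem lemma5p3:
  fixes r d j :: nat
  assumes "r > 0"
  shows "A_tilde r d j = A_count r d j"
proof -
  have "A_tilde r d j = (\<Sum>ks\<in>Th r (r*d) (j + r*d*(d+1) div 2). \<Prod>i<length ks. r choose (ks ! i))"
    by (simp add: A_tilde_def Theta_def Th_def)
  also have "\<dots> = card (SS r (r*d) (j + r*d*(d+1) div 2))" by (rule step1)
  also have "\<dots> = A_count r d j" by (rule step2[OF assms])
  finally show ?thesis .
qed

end
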